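(* Let $V\subset\mathbb{R}^4$ be the (central) hypersurface with equation $x^8=(z_1^2+z_2^2)y^8$ in coordinates $(x,y,z_1,z_2)$. Then the ring $\mathcal{R}^0(V)$ of continuous rational functions on $V$ does not have the substitution property over $\mathbb{R}[V]$ along algebraic Puiseux arcs.
   Context: $\mathcal{R}^0(V)$: continuous (Euclidean) functions $V\to\mathbb{R}$ whose restriction to some non-empty Zariski open subset of $V$ is regular. $\mathbb{R}[[t^*]]_{\mathrm{alg}}$: Puiseux series $\sum_{i\ge0}a_it^{i/m}$ of non-negative order which are algebraic over $\mathbb{R}[t]$. Substitution along algebraic Puiseux arcs means: every $\mathbb{R}$-algebra homomorphism $\mathbb{R}[V]\to\mathbb{R}[[t^*]]_{\mathrm{alg}}$ admits one and only one extension to a homomorphism $\mathcal{R}^0(V)\to\mathbb{R}[[t^*]]_{\mathrm{alg}}$. *)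

theory Defs
  imports "HOL-Analysis.Analysis" "HOL-Computational_Algebra.Polynomial"
begin

type_synonym pt4 = "real \<times> real \<times> real \<times> real"

definition poly4 :: "(pt4 \<Rightarrow> real) \<Rightarrow> bool" where
  "poly4 f \<longleftrightarrow> (\<exists>(c :: nat \<times> nat \<times> nat \<times> nat \<Rightarrow> real) S. finite S \<and>
      (\<forall>x y z w. f (x, y, z, w) =
         (\<Sum>(i, j, k, l)\<in>S. c (i, j, k, l) * x ^ i * y ^ j * z ^ k * w ^ l)))"

definition zariski_open_in :: "pt4 set \<Rightarrow> pt4 set \<Rightarrow> bool" where
  "zariski_open_in V U \<longleftrightarrow>
     (\<exists>P. (\<forall>p\<in>P. poly4 p) \<and> U = V - {x. \<forall>p\<in>P. p x = 0})"

text \<open>Elements of rings of functions on V are represented by functions on R^4 that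
  vanish outside V (so equality of functions on V is equality in HOL).\<close>
definition coord_ring :: "pt4 set \<Rightarrow> (pt4 \<Rightarrow> real) set" where
  "coord_ring V = {f. (\<forall>x. x \<notin> V \<longrightarrow> f x = 0) \<and> (\<exists>p. poly4 p \<and> (\<forall>x\<in>V. f x = p x))}"

definition cont_rat :: "pt4 set \<Rightarrow> (pt4 \<Rightarrow> real) set" where
  "cont_rat V = {f. (\<forall>x. x \<notin> V \<longrightarrow> f x = 0) \<and> continuous_on V f \<and>
      (\<exists>U p q. zariski_open_in V U \<and> U \<noteq> {} \<and> poly4 p \<and> poly4 q \<and>
          (\<forall>x\<in>U. q x \<noteq> 0 \<and> f x = p x / q x))}"

definition fconst :: "pt4 set \<Rightarrow> real \<Rightarrow> pt4 \<Rightarrow> real" where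
  "fconst V c = (\<lambda>x. if x \<in> V then c else 0)"

definition is_puiseux :: "(rat \<Rightarrow> real) \<Rightarrow> bool" where
  "is_puiseux s \<longleftrightarrow> (\<exists>m::nat. m > 0 \<and>
      (\<forall>q. s q \<noteq> 0 \<longrightarrow> q \<ge> 0 \<and> (\<exists>k::nat. q = of_nat k / of_nat m)))"

definition ps_add :: "(rat \<Rightarrow> real) \<Rightarrow> (rat \<Rightarrow> real) \<Rightarrow> rat \<Rightarrow> real" where
  "ps_add f g = (\<lambda>q. f q + g q)"

definition ps_mult :: "(rat \<Rightarrow> real) \<Rightarrow> (rat \<Rightarrow> real) \<Rightarrow> rat \<Rightarrow> real" where
  "ps_mult f g = (\<lambda>q. \<Sum>a\<in>{a. f a \<noteq> 0 \<and> g (q - a) \<noteq> 0}. f a * g (q - a))"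

definition ps_const :: "real \<Rightarrow> rat \<Rightarrow> real" where
  "ps_const c = (\<lambda>q. if q = 0 then c else 0)"

fun ps_pow :: "(rat \<Rightarrow> real) \<Rightarrow> nat \<Rightarrow> rat \<Rightarrow> real" where
  "ps_pow s 0 = ps_const 1"
| "ps_pow s (Suc n) = ps_mult s (ps_pow s n)"

definition ps_of_poly :: "real poly \<Rightarrow> rat \<Rightarrow> real" where
  "ps_of_poly p = (\<lambda>q. if (\<exists>k::nat. q = of_nat k) then coeff p (nat \<lfloor>q\<rfloor>) else 0)"

definition ps_eval :: "real poly poly \<Rightarrow> (rat \<Rightarrow> real) \<Rightarrow> rat \<Rightarrow> real" where
  "ps_eval P s = (\<lambda>q. \<Sum>i\<le>degree P. ps_mult (ps_of_poly (coeff P i)) (ps_pow s i) q)"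

definition alg_puiseux :: "(rat \<Rightarrow> real) set" where
  "alg_puiseux = {s. is_puiseux s \<and> (\<exists>P. P \<noteq> 0 \<and> ps_eval P s = (\<lambda>_. 0))}"

definition alg_hom_into_ps :: "pt4 set \<Rightarrow> (pt4 \<Rightarrow> real) set \<Rightarrow> ((pt4 \<Rightarrow> real) \<Rightarrow> rat \<Rightarrow> real) \<Rightarrow> bool" where
  "alg_hom_into_ps V A h \<longleftrightarrow>
     (\<forall>f\<in>A. h f \<in> alg_puiseux) \<and>
     (\<forall>f\<in>A. \<forall>g\<in>A. h (\<lambda>x. f x + g x) = ps_add (h f) (h g)) \<and>
     (\<forall>f\<in>A. \<forall>g\<in>A. h (\<lambda>x. f x * g x) = ps_mult (h f) (h g)) \<and>
     (\<forall>c. h (fconst V c) = ps_const c)"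

definition substitution_property :: "pt4 set \<Rightarrow> bool" where
  "substitution_property V \<longleftrightarrow>
     (\<forall>\<phi>. alg_hom_into_ps V (coord_ring V) \<phi> \<longrightarrow>
        (\<exists>\<psi>. alg_hom_into_ps V (cont_rat V) \<psi> \<and> (\<forall>f\<in>coord_ring V. \<psi> f = \<phi> f)) \<and>
        (\<forall>\<psi>1 \<psi>2. alg_hom_into_ps V (cont_rat V) \<psi>1 \<and> (\<forall>f\<in>coord_ring V. \<psi>1 f = \<phi> f) \<and>
                  alg_hom_into_ps V (cont_rat V) \<psi>2 \<and> (\<forall>f\<in>coord_ring V. \<psi>2 f = \<phi> f)
                  \<longrightarrow> (\<forall>f\<in>cont_rat V. \<psi>1 f = \<psi>2 f)))"

definition V_ex :: "pt4 set" where
  "V_ex = {(x, y, z1, z2). x ^ 8 = (z1 ^ 2 + z2 ^ 2) * y ^ 8}"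

end

theory Submission
  imports Defs "HOL-Computational_Algebra.Polynomial_FPS"
begin

definition E :: "real fps \<Rightarrow> rat \<Rightarrow> real" where
  "E S = (\<lambda>q. if (\<exists>k::nat. q = of_nat k) then fps_nth S (nat \<lfloor>q\<rfloor>) else 0)"

lemma E_nat[simp]: "E S (of_nat n) = fps_nth S n"
  by (auto simp: E_def)

lemma E_0[simp]: "E S 0 = fps_nth S 0"
  using E_nat[of S 0] by simp

lemma E_notnat: "\<not>(\<exists>k::nat. q = of_nat k) \<Longrightarrow> E S q = 0"
  by (auto simp: E_def)

lemma E_add: "ps_add (E A) (E B) = E (A + B)"
  by (auto simp: ps_add_def E_def)

lemma ps_of_poly_E: "ps_of_poly p = E (fps_of_poly p)"
  by (auto simp: ps_of_poly_def E_def fps_of_poly_def)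

lemma ps_const_E: "ps_const c = E (fps_const c)"
proof
  fix q :: rat
  show "ps_const c q = E (fps_const c) q"
  proof (cases "\<exists>k::nat. q = of_nat k")
    case True
    then obtain k where k: "q = of_nat k" by blast
    then show ?thesis by (cases "k = 0") (auto simp: ps_const_def)
  next
    case False
    then have "q \<noteq> 0" by (metis of_nat_0)
    with False show ?thesis by (simp add: ps_const_def E_notnat)
  qed
qed

lemma E_mult: "ps_mult (E A) (E B) = E (A * B)"
proof
  fix q :: rat
  let ?T = "{a. E A a \<noteq> 0 \<and> E B (q - a) \<noteq> 0}"
  show "ps_mult (E A) (E B) q = E (A * B) q"
  proof (cases "\<exists>k::nat. q = of_nat k")
    case False
    have "?T = {}"
    proof (rule ccontr)
      assume "?T \<noteq> {}"
      then obtain a where a: "E A a \<noteq> 0" "E B (q - a) \<noteq> 0" by blast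
      then obtain i j :: nat where "a = of_nat i" "q - a = of_nat j"
        by (metis E_notnat)
      then have "q = of_nat (i + j)" by simp
      with False show False by blast
    qed
    have "ps_mult (E A) (E B) q = (\<Sum>a\<in>?T. E A a * E B (q - a))"
      by (simp add: ps_mult_def)
    also have "\<dots> = 0" using \<open>?T = {}\<close> by (simp only: sum.empty)
    finally show ?thesis using False by (simp add: E_notnat)
  next
    case True
    then obtain n where n: "q = of_nat n" by blast
    have sub: "?T \<subseteq> of_nat ` {0..n}"
    proof
      fix a assume "a \<in> ?T"
      then have a: "E A a \<noteq> 0" "E B (q - a) \<noteq> 0" by auto
      then obtain i j :: nat where ij: "a = of_nat i" "q - a = of_nat j"
        by (metis E_notnat)
      then have "of_nat n = (of_nat (i + j) :: rat)" using n by simp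
      then have "n = i + j" by (simp only: of_nat_eq_iff)
      then show "a \<in> of_nat ` {0..n}" using ij by auto
    qed
    have "ps_mult (E A) (E B) q = (\<Sum>a\<in>?T. E A a * E B (q - a))"
      by (simp add: ps_mult_def)
    also have "\<dots> = (\<Sum>a\<in>of_nat ` {0..n}. E A a * E B (q - a))"
      by (rule sum.mono_neutral_left) (use sub in auto)
    also have "\<dots> = (\<Sum>i\<in>{0..n}. E A (of_nat i) * E B (q - of_nat i))"
      by (subst sum.reindex) (auto simp: inj_on_def)
    also have "\<dots> = (\<Sum>i\<in>{0..n}. fps_nth A i * fps_nth B (n - i))"
      by (rule sum.cong) (auto simp: n of_nat_diff[symmetric] simp del: of_nat_diff)
    also have "\<dots> = E (A * B) q" by (simp add: n fps_mult_nth)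
    finally show ?thesis .
  qed
qed

lemma E_alg:
  assumes "fps_of_poly D * S = fps_of_poly N" "D \<noteq> 0"
  shows "E S \<in> alg_puiseux"
proof -
  have isp: "is_puiseux (E S)"
    unfolding is_puiseux_def
    by (rule exI[of _ 1]) (auto simp: E_def)
  define P :: "real poly poly" where "P = [:-N, D:]"
  have P0: "P \<noteq> 0" using assms(2) by (simp add: P_def)
  have dP: "degree P = 1" using assms(2) by (simp add: P_def)
  have "ps_eval P (E S) = (\<lambda>q. ps_mult (ps_of_poly (-N)) (ps_const 1) q
          + ps_mult (ps_of_poly D) (ps_mult (E S) (ps_const 1)) q)"
    using assms(2) by (simp add: ps_eval_def dP P_def)
  also have "\<dots> = E (fps_of_poly (-N) + fps_of_poly D * S)"
    by (simp add: ps_of_poly_E ps_const_E E_mult E_add[symmetric] ps_add_def)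
  also have "\<dots> = (\<lambda>_. 0)"
    using assms(1) by (auto simp: fps_of_poly_uminus E_def)
  finally show ?thesis using isp P0 by (auto simp: alg_puiseux_def)
qed


definition sg :: "real fps \<Rightarrow> real fps" where
  "sg S = Abs_fps (\<lambda>n. (-1) ^ n * fps_nth S n)"

lemma sg_nth[simp]: "fps_nth (sg S) n = (-1) ^ n * fps_nth S n"
  by (simp add: sg_def)

lemma sg_add: "sg (A + B) = sg A + sg B"
  by (simp add: fps_eq_iff algebra_simps)

lemma sg_mult: "sg (A * B) = sg A * sg B"
proof (rule fps_ext)
  fix n
  have "fps_nth (sg (A * B)) n = (\<Sum>i=0..n. (-1) ^ n * (fps_nth A i * fps_nth B (n - i)))"
    by (simp add: fps_mult_nth sum_distrib_left)
  also have "\<dots> = (\<Sum>i=0..n. ((-1) ^ i * fps_nth A i) * ((-1) ^ (n - i) * fps_nth B (n - i)))"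
  proof (rule sum.cong)
    fix i assume "i \<in> {0..n}"
    then have "(-1::real) ^ n = (-1) ^ i * (-1) ^ (n - i)"
      by (simp add: power_add[symmetric])
    then show "(-1) ^ n * (fps_nth A i * fps_nth B (n - i)) =
      ((-1) ^ i * fps_nth A i) * ((-1) ^ (n - i) * fps_nth B (n - i))" by simp
  qed simp
  also have "\<dots> = fps_nth (sg A * sg B) n" by (simp add: fps_mult_nth)
  finally show "fps_nth (sg (A * B)) n = fps_nth (sg A * sg B) n" .
qed

lemma sg_const: "sg (fps_const c) = fps_const c"
  by (simp add: fps_eq_iff)

lemma coeff_pcompose_lin: "coeff (pcompose P [:0, c:]) n = (c::real) ^ n * coeff P n"
proof (induction P arbitrary: n)
  case 0
  then show ?case by simp
next
  case (pCons a p)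
  have "[:0, c:] * pcompose p [:0, c:] = pCons 0 (smult c (pcompose p [:0, c:]))"
    by simp
  then show ?case using pCons
    by (cases n) (auto simp: pcompose_pCons coeff_pCons)
qed

lemma sg_poly: "sg (fps_of_poly P) = fps_of_poly (pcompose P [:0, -1:])"
  by (simp add: fps_eq_iff coeff_pcompose_lin)

lemma sg_poly_even:
  assumes "\<And>t. poly P (-t) = poly P t"
  shows "sg (fps_of_poly P) = fps_of_poly P"
proof -
  have "poly (pcompose P [:0, -1:]) = poly P"
    using assms by (auto simp: poly_pcompose)
  then have "pcompose P [:0, -1:] = P" by (simp add: poly_eq_poly_eq_iff)
  then show ?thesis by (simp add: sg_poly)
qed

definition Gf :: "(pt4 \<Rightarrow> real) \<Rightarrow> real \<Rightarrow> real" where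
  "Gf g t = g (0, 0, t ^ 2, 0)"

definition rright :: "(pt4 \<Rightarrow> real) \<Rightarrow> real fps \<Rightarrow> bool" where
  "rright g S \<longleftrightarrow> (\<exists>N D (\<epsilon>::real). \<epsilon> > 0 \<and> coeff D 0 \<noteq> 0 \<and>
     (\<forall>t. 0 < t \<and> t < \<epsilon> \<longrightarrow> poly D t \<noteq> 0 \<and> Gf g t = poly N t / poly D t) \<and>
     fps_of_poly D * S = fps_of_poly N)"

lemma poly_eq_on_Ioo:
  fixes p q :: "real poly"
  assumes "a < b" "\<And>t. a < t \<Longrightarrow> t < b \<Longrightarrow> poly p t = poly q t"
  shows "p = q"
proof (rule ccontr)
  assume "p \<noteq> q"
  then have "p - q \<noteq> 0" by simp
  then have "finite {x. poly (p - q) x = 0}" by (rule poly_roots_finite)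
  moreover have "{a<..<b} \<subseteq> {x. poly (p - q) x = 0}" using assms(2) by auto
  ultimately have "finite {a<..<b}" by (rule finite_subset[rotated])
  then show False using infinite_Ioo[OF assms(1)] by simp
qed

lemma rright_unique:
  assumes "rright g S1" "rright g S2"
  shows "S1 = S2"
proof -
  obtain N1 D1 e1 where 1: "e1 > 0" "coeff D1 0 \<noteq> 0"
    "\<forall>t. 0 < t \<and> t < e1 \<longrightarrow> poly D1 t \<noteq> 0 \<and> Gf g t = poly N1 t / poly D1 t"
    "fps_of_poly D1 * S1 = fps_of_poly N1"
    using assms(1) unfolding rright_def by blast
  obtain N2 D2 e2 where 2: "e2 > 0" "coeff D2 0 \<noteq> 0"
    "\<forall>t. 0 < t \<and> t < e2 \<longrightarrow> poly D2 t \<noteq> 0 \<and> Gf g t = poly N2 t / poly D2 t"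
    "fps_of_poly D2 * S2 = fps_of_poly N2"
    using assms(2) unfolding rright_def by blast
  have "N1 * D2 = N2 * D1"
  proof (rule poly_eq_on_Ioo[of 0 "min e1 e2"])
    show "0 < min e1 e2" using 1 2 by simp
    fix t assume t: "0 < t" "t < min e1 e2"
    then have "poly D1 t \<noteq> 0" "poly D2 t \<noteq> 0" "poly N1 t / poly D1 t = poly N2 t / poly D2 t"
      using 1(3) 2(3) by auto
    then show "poly (N1 * D2) t = poly (N2 * D1) t"
      by (simp add: field_simps)
  qed
  then have "fps_of_poly (D1 * D2) * S1 = fps_of_poly (D1 * D2) * S2"
    using 1(4) 2(4)
    by (metis (no_types, lifting) fps_of_poly_mult mult.assoc mult.commute)
  moreover have "fps_of_poly (D1 * D2) \<noteq> 0"
  proof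
    assume "fps_of_poly (D1 * D2) = 0"
    then have "D1 * D2 = 0" by (metis fps_of_poly_0 fps_of_poly_eq_iff)
    then show False using 1(2) 2(2) by auto
  qed
  ultimately show ?thesis by simp
qed

lemma rright_add:
  assumes "rright g S1" "rright h S2"
  shows "rright (\<lambda>x. g x + h x) (S1 + S2)"
proof -
  obtain N1 D1 e1 where 1: "e1 > 0" "coeff D1 0 \<noteq> 0"
    "\<forall>t. 0 < t \<and> t < e1 \<longrightarrow> poly D1 t \<noteq> 0 \<and> Gf g t = poly N1 t / poly D1 t"
    "fps_of_poly D1 * S1 = fps_of_poly N1"
    using assms(1) unfolding rright_def by blast
  obtain N2 D2 e2 where 2: "e2 > 0" "coeff D2 0 \<noteq> 0"
    "\<forall>t. 0 < t \<and> t < e2 \<longrightarrow> poly D2 t \<noteq> 0 \<and> Gf h t = poly N2 t / poly D2 t"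
    "fps_of_poly D2 * S2 = fps_of_poly N2"
    using assms(2) unfolding rright_def by blast
  show ?thesis unfolding rright_def
  proof (rule exI[of _ "N1 * D2 + N2 * D1"], rule exI[of _ "D1 * D2"], rule exI[of _ "min e1 e2"], intro conjI)
    show "0 < min e1 e2" using 1 2 by simp
    show "coeff (D1 * D2) 0 \<noteq> 0" using 1 2 by (simp add: coeff_mult_0)
    show "\<forall>t. 0 < t \<and> t < min e1 e2 \<longrightarrow> poly (D1 * D2) t \<noteq> 0 \<and> Gf (\<lambda>x. g x + h x) t = poly (N1 * D2 + N2 * D1) t / poly (D1 * D2) t"
    proof (intro allI impI)
    fix t assume t: "0 < t \<and> t < min e1 e2"
    then have a: "poly D1 t \<noteq> 0" "poly D2 t \<noteq> 0" "Gf g t = poly N1 t / poly D1 t"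
      "Gf h t = poly N2 t / poly D2 t"
      using 1(3) 2(3) by auto
    then show "poly (D1 * D2) t \<noteq> 0 \<and> Gf (\<lambda>x. g x + h x) t = poly (N1 * D2 + N2 * D1) t / poly (D1 * D2) t"
      using a by (simp add: Gf_def field_simps)
    qed
  next
    show "fps_of_poly (D1 * D2) * (S1 + S2) = fps_of_poly (N1 * D2 + N2 * D1)"
      using 1(4) 2(4) by (simp add: fps_of_poly_mult fps_of_poly_add algebra_simps)
  qed
qed

lemma rright_mult:
  assumes "rright g S1" "rright h S2"
  shows "rright (\<lambda>x. g x * h x) (S1 * S2)"
proof -
  obtain N1 D1 e1 where 1: "e1 > 0" "coeff D1 0 \<noteq> 0"
    "\<forall>t. 0 < t \<and> t < e1 \<longrightarrow> poly D1 t \<noteq> 0 \<and> Gf g t = poly N1 t / poly D1 t"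
    "fps_of_poly D1 * S1 = fps_of_poly N1"
    using assms(1) unfolding rright_def by blast
  obtain N2 D2 e2 where 2: "e2 > 0" "coeff D2 0 \<noteq> 0"
    "\<forall>t. 0 < t \<and> t < e2 \<longrightarrow> poly D2 t \<noteq> 0 \<and> Gf h t = poly N2 t / poly D2 t"
    "fps_of_poly D2 * S2 = fps_of_poly N2"
    using assms(2) unfolding rright_def by blast
  show ?thesis unfolding rright_def
  proof (rule exI[of _ "N1 * N2"], rule exI[of _ "D1 * D2"], rule exI[of _ "min e1 e2"], intro conjI)
    show "0 < min e1 e2" using 1 2 by simp
    show "coeff (D1 * D2) 0 \<noteq> 0" using 1 2 by (simp add: coeff_mult_0)
    show "\<forall>t. 0 < t \<and> t < min e1 e2 \<longrightarrow> poly (D1 * D2) t \<noteq> 0 \<and> Gf (\<lambda>x. g x * h x) t = poly (N1 * N2) t / poly (D1 * D2) t"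
    proof (intro allI impI)
    fix t assume t: "0 < t \<and> t < min e1 e2"
    then have a: "poly D1 t \<noteq> 0" "poly D2 t \<noteq> 0" "Gf g t = poly N1 t / poly D1 t"
      "Gf h t = poly N2 t / poly D2 t"
      using 1(3) 2(3) by auto
    then show "poly (D1 * D2) t \<noteq> 0 \<and> Gf (\<lambda>x. g x * h x) t = poly (N1 * N2) t / poly (D1 * D2) t"
      using a by (simp add: Gf_def)
    qed
  next
    show "fps_of_poly (D1 * D2) * (S1 * S2) = fps_of_poly (N1 * N2)"
      using 1(4) 2(4) by (simp add: fps_of_poly_mult algebra_simps)
  qed
qed

lemma rright_poly:
  assumes "\<And>t. Gf g t = poly P t"
  shows "rright g (fps_of_poly P)"
  unfolding rright_def
  by (rule exI[of _ P], rule exI[of _ 1], rule exI[of _ 1]) (simp add: assms)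

lemma V_ex_arc: "(0, 0, t ^ 2, 0) \<in> V_ex"
  by (simp add: V_ex_def)

lemma rright_const: "rright (fconst V_ex c) (fps_const c)"
proof -
  have "\<And>t. Gf (fconst V_ex c) t = poly [:c:] t"
    by (simp add: Gf_def fconst_def V_ex_arc)
  from rright_poly[OF this] show ?thesis by (simp add: fps_of_poly_const)
qed

definition Sel :: "(pt4 \<Rightarrow> real) \<Rightarrow> real fps" where
  "Sel g = (SOME S. rright g S)"

lemma Sel: "rright g S \<Longrightarrow> Sel g = S"
  unfolding Sel_def by (rule some_equality) (auto intro: rright_unique)

definition psi_p :: "(pt4 \<Rightarrow> real) \<Rightarrow> rat \<Rightarrow> real" where
  "psi_p g = E (Sel g)"

definition psi_m :: "(pt4 \<Rightarrow> real) \<Rightarrow> rat \<Rightarrow> real" where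
  "psi_m g = E (sg (Sel g))"

lemma rright_alg:
  assumes "rright g S"
  shows "E S \<in> alg_puiseux" "E (sg S) \<in> alg_puiseux"
proof -
  obtain N D e where 1: "coeff D 0 \<noteq> 0" "fps_of_poly D * S = fps_of_poly N"
    using assms unfolding rright_def by blast
  then have "D \<noteq> 0" by auto
  then show "E S \<in> alg_puiseux" using 1 by (intro E_alg)
  have "fps_of_poly (pcompose D [:0, -1:]) * sg S = fps_of_poly (pcompose N [:0, -1:])"
    using 1(2) by (metis sg_mult sg_poly)
  moreover have "pcompose D [:0, -1:] \<noteq> 0"
  proof
    assume "pcompose D [:0, -1:] = 0"
    then have "coeff (pcompose D [:0, -1:]) 0 = 0" by simp
    then show False using 1(1) by (simp only: coeff_pcompose_lin) simp
  qed
  ultimately show "E (sg S) \<in> alg_puiseux" by (intro E_alg)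
qed

lemma psi_hom:
  assumes "\<And>f. f \<in> A \<Longrightarrow> \<exists>S. rright f S"
  shows "alg_hom_into_ps V_ex A psi_p" "alg_hom_into_ps V_ex A psi_m"
proof -
  have sel: "rright f (Sel f)" if "f \<in> A" for f
    using assms[OF that] Sel by metis
  have add: "Sel (\<lambda>x. f x + g x) = Sel f + Sel g" if "f \<in> A" "g \<in> A" for f g
    using Sel rright_add sel that by blast
  have mult: "Sel (\<lambda>x. f x * g x) = Sel f * Sel g" if "f \<in> A" "g \<in> A" for f g
    using Sel rright_mult sel that by blast
  have const: "Sel (fconst V_ex c) = fps_const c" for c
    using Sel rright_const by blast
  show "alg_hom_into_ps V_ex A psi_p"
    unfolding alg_hom_into_ps_def psi_p_def
    using sel rright_alg(1) add mult const
    by (auto simp: E_add E_mult ps_const_E)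
  show "alg_hom_into_ps V_ex A psi_m"
    unfolding alg_hom_into_ps_def psi_m_def
    using sel rright_alg(2) add mult const
    by (auto simp: E_add E_mult ps_const_E sg_add sg_mult sg_const)
qed

lemma poly4_cont: assumes "poly4 h" shows "continuous_on UNIV h"
proof -
  obtain c S where h: "\<forall>x y z w. h (x, y, z, w) =
         (\<Sum>(i, j, k, l)\<in>S. c (i, j, k, l) * x ^ i * y ^ j * z ^ k * w ^ l)"
    using assms unfolding poly4_def by blast
  have "h = (\<lambda>p. \<Sum>q\<in>S. c q * fst p ^ fst q * fst (snd p) ^ fst (snd q) *
             fst (snd (snd p)) ^ fst (snd (snd q)) * snd (snd (snd p)) ^ snd (snd (snd q)))"
    using h by (auto simp: fun_eq_iff case_prod_beta)
  moreover have "continuous_on UNIV (\<lambda>p::pt4. \<Sum>q\<in>S. c q * fst p ^ fst q * fst (snd p) ^ fst (snd q) *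
             fst (snd (snd p)) ^ fst (snd (snd q)) * snd (snd (snd p)) ^ snd (snd (snd q)))"
    by (intro continuous_intros)
  ultimately show ?thesis by simp
qed

definition ev2 :: "real poly poly \<Rightarrow> real \<Rightarrow> real \<Rightarrow> real" where
  "ev2 H w y = poly (poly H [:y:]) w"

definition is2 :: "(real \<Rightarrow> real \<Rightarrow> real) \<Rightarrow> bool" where
  "is2 f \<longleftrightarrow> (\<exists>H. \<forall>w y. f w y = ev2 H w y)"

lemma is2_const: "is2 (\<lambda>w y. c)"
  unfolding is2_def ev2_def by (rule exI[of _ "[:[:c:]:]"]) simp

lemma is2_w: "is2 (\<lambda>w y. w)"
  unfolding is2_def ev2_def by (rule exI[of _ "[:[:0, 1:]:]"]) simp

lemma is2_y: "is2 (\<lambda>w y. y)"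
  unfolding is2_def ev2_def by (rule exI[of _ "[:0, 1:]"]) simp

lemma is2_add: "is2 f \<Longrightarrow> is2 g \<Longrightarrow> is2 (\<lambda>w y. f w y + g w y)"
  unfolding is2_def ev2_def by (metis poly_add)

lemma is2_mult: "is2 f \<Longrightarrow> is2 g \<Longrightarrow> is2 (\<lambda>w y. f w y * g w y)"
  unfolding is2_def ev2_def by (metis poly_mult)

lemma is2_diff: "is2 f \<Longrightarrow> is2 g \<Longrightarrow> is2 (\<lambda>w y. f w y - g w y)"
  unfolding is2_def ev2_def by (metis poly_diff)

lemma is2_pow: "is2 f \<Longrightarrow> is2 (\<lambda>w y. f w y ^ n)"
  by (induction n) (auto intro: is2_const is2_mult[of f "\<lambda>w y. f w y ^ _", simplified])

lemma is2_sum: "finite S \<Longrightarrow> (\<And>i. i \<in> S \<Longrightarrow> is2 (f i)) \<Longrightarrow> is2 (\<lambda>w y. \<Sum>i\<in>S. f i w y)"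
  by (induction S rule: finite_induct) (auto intro: is2_const is2_add[of "f _" "\<lambda>w y. \<Sum>i\<in>_. f i w y", simplified])

lemma is2_poly4:
  assumes "poly4 p" "is2 X" "is2 Y" "is2 Z1" "is2 Z2"
  shows "is2 (\<lambda>w y. p (X w y, Y w y, Z1 w y, Z2 w y))"
proof -
  obtain c S where S: "finite S" and h: "\<forall>x y z w. p (x, y, z, w) =
         (\<Sum>(i, j, k, l)\<in>S. c (i, j, k, l) * x ^ i * y ^ j * z ^ k * w ^ l)"
    using assms(1) unfolding poly4_def by blast
  have "is2 (\<lambda>w y. \<Sum>q\<in>S. (case q of (i, j, k, l) \<Rightarrow> c (i, j, k, l) * X w y ^ i * Y w y ^ j * Z1 w y ^ k * Z2 w y ^ l))"
  proof (rule is2_sum[OF S])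
    fix q assume "q \<in> S"
    obtain i j k l where q: "q = (i, j, k, l)" by (cases q) auto
    show "is2 (\<lambda>w y. case q of (i, j, k, l) \<Rightarrow> c (i, j, k, l) * X w y ^ i * Y w y ^ j * Z1 w y ^ k * Z2 w y ^ l)"
      unfolding q using assms(2-5)
      by (simp, intro is2_mult is2_pow is2_const)
  qed
  then show ?thesis using h by simp
qed

definition is1 :: "(real \<Rightarrow> real) \<Rightarrow> bool" where
  "is1 f \<longleftrightarrow> (\<exists>P. \<forall>t. f t = poly P t)"

lemma is1_from_is2: "is2 f \<Longrightarrow> is1 (\<lambda>t. f t 0)"
  unfolding is1_def is2_def ev2_def by (metis poly_0_coeff_0)

definition Qf :: "real \<Rightarrow> real \<Rightarrow> real \<Rightarrow> pt4" where
  "Qf l w y = (w * (1 + (l * y)^2) * y, y, w^4 * (1 + (l * y)^2)^3 * (1 - (l * y)^2),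
               w^4 * (1 + (l * y)^2)^3 * (2 * l * y))"

lemma Qf_in: "Qf l w y \<in> V_ex"
proof -
  define b where "b = l * y"
  have "(w * (1 + b^2) * y) ^ 8 = ((w^4 * (1 + b^2)^3 * (1 - b^2))^2 + (w^4 * (1 + b^2)^3 * (2 * b))^2) * y ^ 8"
    by algebra
  then show ?thesis by (simp add: Qf_def V_ex_def b_def mult.assoc)
qed

lemma Qf_0: "Qf l w 0 = (0, 0, w^4, 0)"
  by (simp add: Qf_def)

lemma is2_Qf:
  assumes "poly4 p"
  shows "\<exists>H. \<forall>w y. p (Qf l w y) = ev2 H w y"
proof -
  have "is2 (\<lambda>w y. p (w * (1 + (l * y)^2) * y, y, w^4 * (1 + (l * y)^2)^3 * (1 - (l * y)^2),
               w^4 * (1 + (l * y)^2)^3 * (2 * l * y)))"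
    by (intro is2_poly4 assms is2_mult is2_add is2_diff is2_pow is2_const is2_w is2_y)
  then show ?thesis unfolding is2_def Qf_def .
qed

lemma is1_arc:
  assumes "poly4 p"
  shows "\<exists>P. \<forall>t. p (0, 0, t^2, 0) = poly P t"
proof -
  have "is2 (\<lambda>w y. p (0, 0, w^2, 0))"
    by (intro is2_poly4 assms is2_pow is2_const is2_w)
  from is1_from_is2[OF this] show ?thesis unfolding is1_def .
qed

lemma zero_right_on:
  fixes f :: "real \<Rightarrow> real"
  assumes "continuous_on UNIV f" "\<And>s. 0 < s \<Longrightarrow> f s = 0"
  shows "f 0 = 0"
proof -
  have "isCont f 0" using assms(1) by (simp add: continuous_on_eq_continuous_at)
  then have 1: "(f \<longlongrightarrow> f 0) (at_right 0)"
    by (simp add: isCont_def filterlim_at_split)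
  have "eventually (\<lambda>s. f s = 0) (at_right (0::real))"
    using eventually_at_right_less[of 0] by eventually_elim (use assms(2) in auto)
  then have 2: "(f \<longlongrightarrow> 0) (at_right 0)"
    by (rule tendsto_eventually)
  show ?thesis using tendsto_unique[OF trivial_limit_at_right_real 1 2] .
qed

lemma hitA:
  assumes V: "(x, y, z1, z2) \<in> V_ex" and y: "y \<noteq> 0" and nz: "\<not> (z2 = 0 \<and> z1 < 0)"
  shows "\<exists>l w. Qf l w y = (x, y, z1, z2)"
proof -
  define u where "u = x / y"
  have x: "x = u * y" using y by (simp add: u_def)
  have "(u * y) ^ 8 = (z1^2 + z2^2) * y ^ 8" using V x by (simp add: V_ex_def)
  then have u8: "u ^ 8 = z1^2 + z2^2" using y by (simp add: power_mult_distrib)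
  define m where "m = sqrt (z1^2 + z2^2)"
  have m0: "m \<ge> 0" by (simp add: m_def)
  have mm: "m^2 = z1^2 + z2^2" by (simp add: m_def)
  have u4: "u ^ 4 = m"
  proof -
    have a: "(u^4)^2 = u^8" by (simp only: power_mult[symmetric]) simp
    have "(u^4)^2 = m^2" using u8 mm a by simp
    moreover have "u^4 \<ge> 0" by (simp add: zero_le_even_power)
    ultimately show ?thesis using m0 by (metis power2_eq_iff_nonneg)
  qed
  show ?thesis
  proof (cases "m = 0")
    case True
    then have "z1 = 0" "z2 = 0" using mm by (auto simp: add_nonneg_eq_0_iff)
    moreover have "u = 0" using u4 True by simp
    ultimately show ?thesis using x by (intro exI[of _ 0]) (simp add: Qf_def)
  next
    case False
    then have mpos: "m > 0" using m0 by simp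
    define c where "c = z1 / m"
    define s where "s = z2 / m"
    have "c^2 + s^2 = (z1^2 + z2^2) / m^2" by (simp add: c_def s_def power_divide add_divide_distrib)
    then have cs: "c^2 + s^2 = 1" using mm mpos by (metis divide_self power_not_zero less_irrefl)
    have z1: "z1 = m * c" and z2: "z2 = m * s" using mpos by (simp_all add: c_def s_def)
    have c1: "1 + c > 0"
    proof (rule ccontr)
      assume "\<not> 1 + c > 0"
      moreover have "c^2 \<le> 1" using cs zero_le_power2[of s] by linarith
      then have "\<bar>c\<bar> \<le> 1" by (simp add: abs_square_le_1)
      then have "c \<ge> -1" by linarith
      ultimately have "c = -1" by simp
      then have "s = 0" using cs by simp
      then show False using nz \<open>c = -1\<close> z1 z2 mpos by simp
    qed
    define b where "b = s / (1 + c)"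
    have bs: "b^2 * (1 + c)^2 = s^2" using c1 by (simp add: b_def power_divide)
    have bb: "(1 + b^2) * (1 + c) = 2"
    proof -
      have "(1 + b^2) * (1 + c)^2 = (1+c)^2 + s^2" using bs by (simp add: algebra_simps)
      also have "\<dots> = 2 * (1 + c)" using cs by (simp add: power2_eq_square algebra_simps)
      finally have "((1 + b^2) * (1 + c)) * (1 + c) = 2 * (1 + c)" by (simp add: power2_eq_square mult.assoc)
      then show ?thesis using c1 by (metis mult_right_cancel less_irrefl)
    qed
    have bpos: "1 + b^2 > 0" by (simp add: add_pos_nonneg)
    have e1: "1 - b^2 = c * (1 + b^2)"
    proof -
      have "(1 - b^2) * (1 + c)^2 = (1+c)^2 - s^2" using bs by (simp add: algebra_simps)
      also have "\<dots> = c * (2 * (1 + c))" using cs by (simp add: power2_eq_square algebra_simps)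
      finally have A: "(1 - b^2) * (1 + c)^2 = c * (2 * (1 + c))" .
      have "c * (1 + b^2) * (1 + c)^2 = c * ((1 + b^2) * (1 + c)) * (1 + c)"
        by (simp add: power2_eq_square algebra_simps)
      also have "\<dots> = c * (2 * (1 + c))" using bb by simp
      finally have B: "c * (1 + b^2) * (1 + c)^2 = c * (2 * (1 + c))" .
      from A B have "(1 - b^2) * (1 + c)^2 = (c * (1 + b^2)) * (1 + c)^2" by (simp only:)
      then show ?thesis using c1 by (metis mult_right_cancel power_not_zero less_irrefl)
    qed
    have e2: "2 * b = s * (1 + b^2)"
    proof -
      have X: "(s * (1 + b^2)) * (1 + c) = 2 * s"
      proof -
        have "(s * (1 + b^2)) * (1 + c) = s * ((1 + b^2) * (1 + c))" by (rule mult.assoc)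
        also have "\<dots> = s * 2" by (simp only: bb)
        finally show ?thesis by simp
      qed
      have Y: "(2 * b) * (1 + c) = 2 * s" using c1 by (simp add: b_def)
      from X Y have "(2 * b) * (1 + c) = (s * (1 + b^2)) * (1 + c)" by (simp only:)
      then show ?thesis using c1 by (metis mult_right_cancel less_irrefl)
    qed
    define l where "l = b / y"
    define w where "w = u / (1 + b^2)"
    have ly: "l * y = b" using y by (simp add: l_def)
    have w1: "w * (1 + b^2) = u" using bpos by (simp add: w_def)
    have w4: "w^4 * (1 + b^2)^3 * (1 + b^2) = m"
    proof -
      have "w^4 * (1 + b^2)^3 * (1 + b^2) = w^4 * (1 + b^2)^4"
        by (simp add: power3_eq_cube power4_eq_xxxx)
      also have "\<dots> = (w * (1 + b^2))^4" by (simp add: power_mult_distrib)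
      finally show ?thesis using w1 u4 by simp
    qed
    have t: "w ^ 4 * (1 + b\<^sup>2) ^ 3 * (1 - b\<^sup>2) = z1"
    proof -
      have "w ^ 4 * (1 + b\<^sup>2) ^ 3 * (1 - b\<^sup>2) = c * (w^4 * (1 + b^2)^3 * (1 + b^2))"
        by (simp add: e1)
      also have "\<dots> = z1" by (simp only: w4 z1) (simp add: mult.commute)
      finally show ?thesis .
    qed
    have f: "w ^ 4 * (1 + b\<^sup>2) ^ 3 * (2 * b) = z2"
    proof -
      have "w ^ 4 * (1 + b\<^sup>2) ^ 3 * (2 * b) = s * (w^4 * (1 + b^2)^3 * (1 + b^2))"
        by (simp add: e2)
      also have "\<dots> = z2" by (simp only: w4 z2) (simp add: mult.commute)
      finally show ?thesis .
    qed
    have "Qf l w y = (x, y, z1, z2)"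
      unfolding Qf_def ly using w1 x t f ly by (simp add: mult.assoc)
    then show ?thesis by blast
  qed
qed


lemma dens_yne:
  fixes h :: "pt4 \<Rightarrow> real"
  assumes cont: "continuous_on UNIV h" and zero: "\<And>l w y. h (Qf l w y) = 0"
    and V: "(x, y, z1, z2) \<in> V_ex" and y: "y \<noteq> 0"
  shows "h (x, y, z1, z2) = 0"
proof (cases "z2 = 0 \<and> z1 < 0")
  case False
  then show ?thesis using hitA[OF V y] zero by metis
next
  case True
  define \<gamma> where "\<gamma> = (\<lambda>s::real. (x, y, z1 * (1 - s^2) / (1 + s^2), - z1 * (2 * s) / (1 + s^2)))"
  have pos: "\<And>s::real. 1 + s^2 \<noteq> 0" by (metis add_pos_nonneg less_irrefl zero_le_power2 zero_less_one)
  have "continuous_on UNIV (\<lambda>s. h (\<gamma> s))"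
    unfolding \<gamma>_def
    by (rule continuous_on_compose2[OF cont]) (auto intro!: continuous_intros simp: pos)
  moreover have "h (\<gamma> s) = 0" if s: "0 < s" for s
  proof -
    have "(z1 * (1 - s^2) / (1 + s^2))^2 + (- z1 * (2 * s) / (1 + s^2))^2
          = z1^2 * ((1 - s^2)^2 + (2 * s)^2) / (1 + s^2)^2"
    proof -
      have a: "(z1 * (1 - s^2) / (1 + s^2))^2 = z1^2 * (1 - s^2)^2 / (1 + s^2)^2"
        by (simp add: power_divide power_mult_distrib)
      have b: "(- z1 * (2 * s) / (1 + s^2))^2 = z1^2 * (2 * s)^2 / (1 + s^2)^2"
        by (simp add: power_divide power_mult_distrib)
      show ?thesis unfolding a b by (simp add: add_divide_distrib distrib_left)
    qed
    also have "(1 - s^2)^2 + (2 * s)^2 = (1 + s^2)^2" by algebra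
    finally have r: "(z1 * (1 - s^2) / (1 + s^2))^2 + (- z1 * (2 * s) / (1 + s^2))^2 = z1^2"
      using pos[of s] by simp
    have Vg: "\<gamma> s \<in> V_ex" using V True r by (simp add: \<gamma>_def V_ex_def)
    have "- z1 * (2 * s) / (1 + s^2) \<noteq> 0" using True s pos[of s] by simp
    then obtain l w where "Qf l w y = \<gamma> s" using hitA[OF Vg[unfolded \<gamma>_def] y] unfolding \<gamma>_def by blast
    then show ?thesis using zero by metis
  qed
  ultimately have "h (\<gamma> 0) = 0" using zero_right_on[of "\<lambda>s. h (\<gamma> s)"] by blast
  then show ?thesis using True by (simp add: \<gamma>_def)
qed


lemma dens:
  fixes h :: "pt4 \<Rightarrow> real"
  assumes cont: "continuous_on UNIV h" and zero: "\<And>l w y. h (Qf l w y) = 0"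
    and V: "p \<in> V_ex"
  shows "h p = 0"
proof -
  obtain x y z1 z2 where p: "p = (x, y, z1, z2)" by (cases p) auto
  show ?thesis
  proof (cases "y = 0")
    case False
    then show ?thesis using dens_yne[OF cont zero] V p by blast
  next
    case True
    then have "x ^ 8 = 0" using V p by (simp add: V_ex_def)
    then have x: "x = 0" by simp
    define \<rho> where "\<rho> = root 8 (z1^2 + z2^2)"
    have \<rho>8: "\<rho> ^ 8 = z1^2 + z2^2" unfolding \<rho>_def by (rule real_root_pow_pos2) auto
    define \<gamma> where "\<gamma> = (\<lambda>s::real. (\<rho> * s, s, z1, z2))"
    have "continuous_on UNIV (\<lambda>s. h (\<gamma> s))"
      unfolding \<gamma>_def
      by (rule continuous_on_compose2[OF cont]) (auto intro!: continuous_intros)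
    moreover have "h (\<gamma> s) = 0" if s: "0 < s" for s
    proof -
      have "\<gamma> s \<in> V_ex" using \<rho>8 by (simp add: \<gamma>_def V_ex_def power_mult_distrib)
      then show ?thesis using dens_yne[OF cont zero] s unfolding \<gamma>_def by simp
    qed
    ultimately have "h (\<gamma> 0) = 0" using zero_right_on[of "\<lambda>s. h (\<gamma> s)"] by blast
    then show ?thesis using True x p by (simp add: \<gamma>_def)
  qed
qed

lemma eq_right:
  fixes f g :: "real \<Rightarrow> real"
  assumes "isCont f 0" "isCont g 0" "\<delta> > 0" "\<And>y. 0 < y \<Longrightarrow> y < \<delta> \<Longrightarrow> f y = g y"
  shows "f 0 = g 0"
proof -
  have 1: "(f \<longlongrightarrow> f 0) (at_right 0)" using assms(1) by (simp add: isCont_def filterlim_at_split)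
  have 2: "(g \<longlongrightarrow> g 0) (at_right 0)" using assms(2) by (simp add: isCont_def filterlim_at_split)
  have "eventually (\<lambda>y. f y = g y) (at_right (0::real))"
    using eventually_conj[OF eventually_at_right_less[of 0] eventually_at_right_real[OF assms(3)]]
    by eventually_elim (use assms(4) in auto)
  then have "(f \<longlongrightarrow> g 0) (at_right 0)" using 2 by (simp add: tendsto_cong)
  show ?thesis by (rule tendsto_unique[OF trivial_limit_at_right_real 1]) fact
qed

lemma factor_right:
  fixes A :: "real poly" and C :: "real \<Rightarrow> real"
  assumes "\<delta> > 0" "isCont C 0" "\<And>y. 0 < y \<Longrightarrow> y < \<delta> \<Longrightarrow> poly A y = y ^ k * C y"
  shows "\<exists>A1. A = [:0, 1:] ^ k * A1 \<and> poly A1 0 = C 0"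
  using assms(3)
proof (induction k arbitrary: A)
  case 0
  have "poly A 0 = C 0"
    by (rule eq_right[OF _ assms(2) assms(1)]) (use 0 in auto)
  then show ?case by (intro exI[of _ A]) simp
next
  case (Suc k)
  have c1: "isCont (\<lambda>y. y ^ Suc k * C y) 0" using assms(2) by (intro continuous_intros)
  have "poly A 0 = 0 ^ Suc k * C 0"
    using eq_right[of "poly A" "\<lambda>y. y ^ Suc k * C y", OF _ c1 assms(1)] Suc.prems by simp
  then have "poly A 0 = 0" by simp
  then have "[:0, 1:] dvd A" using poly_eq_0_iff_dvd[of A 0] by simp
  then obtain A2 where A2: "A = [:0, 1:] * A2" by (elim dvdE)
  have "poly A2 y = y ^ k * C y" if "0 < y" "y < \<delta>" for y
  proof -
    have "y * poly A2 y = y * (y ^ k * C y)" using Suc.prems[OF that] A2 by simp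
    then show ?thesis using that by simp
  qed
  then obtain A1 where "A2 = [:0, 1:] ^ k * A1 \<and> poly A1 0 = C 0" using Suc.IH by blast
  then show ?case using A2 by (intro exI[of _ A1]) (simp add: mult.assoc)
qed

lemma ev2_alt: "ev2 H w y = poly (map_poly (\<lambda>c. poly c w) H) y"
  unfolding ev2_def
  by (induction H) (simp_all add: map_poly_pCons)

lemma ev2_mult: "ev2 (A * B) w y = ev2 A w y * ev2 B w y"
  by (simp add: ev2_def)

lemma ev2_Xk: "ev2 ([:0, 1:] ^ k * B) w y = y ^ k * ev2 B w y"
  by (simp add: ev2_def poly_power)

lemma ev2_y0: "ev2 B w 0 = poly (coeff B 0) w"
  by (simp add: ev2_def poly_0_coeff_0)

lemma ev2_zero: "ev2 0 w y = 0"
  by (simp add: ev2_def)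

lemma poly_split: "\<exists>pe po. \<forall>x::real. poly p x = poly pe (x^2) + x * poly po (x^2)"
proof (induction p)
  case 0
  then show ?case by (intro exI[of _ 0]) simp
next
  case (pCons a p)
  then obtain pe po where h: "\<forall>x::real. poly p x = poly pe (x^2) + x * poly po (x^2)" by blast
  show ?case
    by (rule exI[of _ "pCons a po"], rule exI[of _ pe]) (simp add: h algebra_simps power2_eq_square)
qed

lemma poly_even:
  assumes "\<And>x::real. poly p (-x) = poly p x"
  shows "\<exists>q. \<forall>x. poly p x = poly q (x^2)"
proof -
  obtain pe po where h: "\<forall>x::real. poly p x = poly pe (x^2) + x * poly po (x^2)"
    using poly_split by blast
  have "poly p x = poly pe (x^2)" for x
  proof -
    have "poly p x = poly p (-x)" using assms by simp
    then have "x * poly po (x^2) = - x * poly po (x^2)" using h[rule_format, of x] h[rule_format, of "-x"] by simp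
    then have "x * poly po (x^2) = 0" by simp
    then show ?thesis using h by simp
  qed
  then show ?thesis by blast
qed

lemma poly_eq_cofinite:
  fixes p q r :: "real poly"
  assumes "r \<noteq> 0" "\<And>x. poly r x \<noteq> 0 \<Longrightarrow> poly p x = poly q x"
  shows "p = q"
proof (rule ccontr)
  assume "p \<noteq> q"
  then have "p - q \<noteq> 0" by simp
  have "UNIV \<subseteq> {x. poly (p - q) x = 0} \<union> {x. poly r x = 0}" using assms(2) by auto
  moreover have "finite ({x. poly (p - q) x = 0} \<union> {x. poly r x = 0})"
    using poly_roots_finite[OF \<open>p - q \<noteq> 0\<close>] poly_roots_finite[OF assms(1)] by simp
  ultimately have "finite (UNIV :: real set)" by (rule finite_subset)
  then show False using infinite_UNIV_char_0 by blast
qed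

lemma order0_decomp:
  fixes p :: "'a::idom poly"
  assumes "p \<noteq> 0"
  shows "\<exists>k q. p = [:0, 1:] ^ k * q \<and> poly q 0 \<noteq> 0"
proof -
  obtain q where "p = [:- 0, 1:] ^ order 0 p * q \<and> \<not> [:- 0, 1:] dvd q"
    using order_decomp[OF assms] by blast
  then show ?thesis using poly_eq_0_iff_dvd[of q 0] by auto
qed

lemma cont_arc:
  assumes "continuous_on V_ex g"
  shows "isCont (Gf g) t"
proof -
  have "continuous_on UNIV (\<lambda>t. g (0, 0, t ^ 2, 0))"
    by (rule continuous_on_compose2[OF assms]) (auto intro!: continuous_intros simp: V_ex_arc)
  then show ?thesis unfolding Gf_def by (simp add: continuous_on_eq_continuous_at)
qed

lemma key_2var:
  assumes gc: "continuous_on V_ex g" and p: "poly4 p" and q: "poly4 q" and h: "poly4 h"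
    and U: "\<And>x. x \<in> V_ex \<Longrightarrow> h x \<noteq> 0 \<Longrightarrow> q x \<noteq> 0 \<and> g x = p x / q x"
    and wit: "h (Qf l w1 y1) \<noteq> 0"
  shows "\<exists>a b. b \<noteq> 0 \<and> (\<forall>w. poly b w \<noteq> 0 \<longrightarrow> g (0, 0, w^4, 0) = poly a w / poly b w)"
proof -
  obtain Hh where Hh: "\<And>w y. h (Qf l w y) = ev2 Hh w y" using is2_Qf[OF h] by blast
  obtain Hp where Hp: "\<And>w y. p (Qf l w y) = ev2 Hp w y" using is2_Qf[OF p] by blast
  obtain Hq where Hq: "\<And>w y. q (Qf l w y) = ev2 Hq w y" using is2_Qf[OF q] by blast
  define F where "F = (\<lambda>w y. g (Qf l w y))"
  define Bf where "Bf = Hq * Hh"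
  define Af where "Af = Hp * Hh"
  have FB: "F w y * ev2 Bf w y = ev2 Af w y" if "ev2 Bf w y \<noteq> 0" for w y
  proof -
    have "ev2 Hh w y \<noteq> 0" using that by (simp add: Bf_def ev2_mult)
    then have "h (Qf l w y) \<noteq> 0" using Hh by simp
    then have "q (Qf l w y) \<noteq> 0 \<and> g (Qf l w y) = p (Qf l w y) / q (Qf l w y)"
      using U[OF Qf_in] by blast
    then show ?thesis by (simp add: F_def Bf_def Af_def ev2_mult Hp Hq Hh)
  qed
  have "ev2 Bf w1 y1 \<noteq> 0"
  proof -
    have "q (Qf l w1 y1) \<noteq> 0" using U[OF Qf_in wit] by blast
    then show ?thesis using wit by (simp add: Bf_def ev2_mult Hq Hh)
  qed
  then have "Bf \<noteq> 0" by (auto simp: ev2_zero)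
  then obtain k B' where B': "Bf = [:0, 1:] ^ k * B'" "poly B' 0 \<noteq> 0"
    using order0_decomp by blast
  define b where "b = coeff B' 0"
  have b0: "b \<noteq> 0" using B'(2) by (simp add: b_def poly_0_coeff_0)
  define a where "a = coeff Af k"
  have Fcont: "continuous_on UNIV (F w)" for w
    unfolding F_def Qf_def
    by (rule continuous_on_compose2[OF gc]) (auto intro!: continuous_intros simp: Qf_in[unfolded Qf_def])
  have main: "F w0 0 = poly a w0 / poly b w0" if bw: "poly b w0 \<noteq> 0" for w0
  proof -
    have cB: "isCont (\<lambda>y. ev2 B' w0 y) y" for y by (simp add: ev2_alt)
    have "ev2 B' w0 0 = poly b w0" by (simp add: ev2_y0 b_def)
    then have "ev2 B' w0 0 \<noteq> 0" using bw by simp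
    then obtain \<delta> where \<delta>: "\<delta> > 0" "\<And>y. dist 0 y < \<delta> \<Longrightarrow> ev2 B' w0 y \<noteq> 0"
      using continuous_at_avoid[OF cB[of 0]] by blast
    define C where "C = (\<lambda>y. F w0 y * ev2 B' w0 y)"
    have cC: "isCont C 0" unfolding C_def
      using Fcont[of w0] cB by (intro continuous_intros) (auto simp: continuous_on_eq_continuous_at)
    define Aw where "Aw = map_poly (\<lambda>c. poly c w0) Af"
    have "poly Aw y = y ^ k * C y" if y: "0 < y" "y < \<delta>" for y
    proof -
      have ne: "ev2 B' w0 y \<noteq> 0" using \<delta>(2)[of y] y by simp
      have "ev2 Bf w0 y = y ^ k * ev2 B' w0 y" by (simp add: B'(1) ev2_Xk)
      then have "ev2 Bf w0 y \<noteq> 0" using ne y by simp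
      then have "F w0 y * ev2 Bf w0 y = ev2 Af w0 y" by (rule FB)
      then show ?thesis
        by (simp add: Aw_def C_def ev2_alt[symmetric] \<open>ev2 Bf w0 y = y ^ k * ev2 B' w0 y\<close> algebra_simps)
    qed
    from factor_right[OF \<delta>(1) cC this] obtain A1 where
      A1: "Aw = [:0, 1:] ^ k * A1" "poly A1 0 = C 0" by blast
    have "coeff Aw k = poly a w0"
      by (simp add: Aw_def a_def coeff_map_poly)
    moreover have "coeff Aw k = poly A1 0"
      by (simp add: A1(1) poly_0_coeff_0 monom_altdef[of 1 k, simplified, symmetric] coeff_monom_mult)
    ultimately have "poly a w0 = F w0 0 * poly b w0"
      using A1(2) \<open>ev2 B' w0 0 = poly b w0\<close> by (simp add: C_def)
    then show ?thesis using bw by simp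
  qed
  show ?thesis
    by (rule exI[of _ a], rule exI[of _ b]) (use b0 main in \<open>simp add: F_def Qf_0\<close>)
qed


lemma from_ab:
  assumes gc: "continuous_on V_ex g" and b0: "b \<noteq> 0"
    and ab: "\<And>w. poly b w \<noteq> 0 \<Longrightarrow> g (0, 0, w^4, 0) = poly a w / poly b w"
  shows "\<exists>S. rright g S"
proof -
  define b' where "b' = pcompose b [:0, -1:]"
  define a' where "a' = pcompose a [:0, -1:]"
  have pb': "poly b' w = poly b (-w)" for w by (simp add: b'_def poly_pcompose)
  have pa': "poly a' w = poly a (-w)" for w by (simp add: a'_def poly_pcompose)
  have b'0: "b' \<noteq> 0" using b0 by (simp add: b'_def pcompose_eq_0_iff)
  have E: "a * b' = a' * b"
  proof (rule poly_eq_cofinite[of "b * b'"])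
    show "b * b' \<noteq> 0" using b0 b'0 by simp
    fix w assume "poly (b * b') w \<noteq> 0"
    then have n: "poly b w \<noteq> 0" "poly b (-w) \<noteq> 0" by (auto simp: pb')
    have "poly a w / poly b w = poly a (-w) / poly b (-w)"
      using ab[OF n(1)] ab[OF n(2)] by simp
    then show "poly (a * b') w = poly (a' * b) w" using n by (simp add: pa' pb' field_simps)
  qed
  define N0 where "N0 = a * b'"
  define D0 where "D0 = b * b'"
  have "\<exists>Nq. \<forall>x. poly N0 x = poly Nq (x^2)"
  proof (rule poly_even)
    fix x :: real
    have "poly N0 (-x) = poly (a' * b) x" by (simp add: N0_def pa' pb')
    also have "\<dots> = poly N0 x" by (simp add: N0_def E)
    finally show "poly N0 (-x) = poly N0 x" .
  qed
  then obtain Nq where Nq: "\<And>x. poly N0 x = poly Nq (x^2)" by blast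
  have "\<exists>Dq. \<forall>x. poly D0 x = poly Dq (x^2)"
    by (rule poly_even) (simp add: D0_def pb')
  then obtain Dq where Dq: "\<And>x. poly D0 x = poly Dq (x^2)" by blast
  have "D0 \<noteq> 0" using b0 b'0 by (simp add: D0_def)
  then obtain x0 where "poly D0 x0 \<noteq> 0" using poly_all_0_iff_0 by blast
  then have Dq0: "Dq \<noteq> 0" using Dq by auto
  have GND: "Gf g t = poly Nq t / poly Dq t" if t: "0 < t" "poly Dq t \<noteq> 0" for t
  proof -
    define w where "w = sqrt t"
    have w2: "w^2 = t" using t by (simp add: w_def)
    have "poly D0 w \<noteq> 0" using Dq t w2 by simp
    then have n: "poly b w \<noteq> 0" "poly b (-w) \<noteq> 0" by (auto simp: D0_def pb')
    have "Gf g t = g (0, 0, w^4, 0)"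
      by (simp add: Gf_def w2[symmetric] flip: power_mult)
    also have "\<dots> = poly a w / poly b w" by (rule ab[OF n(1)])
    also have "\<dots> = poly N0 w / poly D0 w" using n by (simp add: N0_def D0_def pb')
    also have "\<dots> = poly Nq t / poly Dq t" by (simp add: Nq Dq w2)
    finally show ?thesis .
  qed
  obtain k D1 where D1: "Dq = [:0, 1:] ^ k * D1" "poly D1 0 \<noteq> 0"
    using order0_decomp[OF Dq0] by blast
  obtain \<epsilon> where \<epsilon>: "\<epsilon> > 0" "\<And>t. dist 0 t < \<epsilon> \<Longrightarrow> poly D1 t \<noteq> 0"
    using continuous_at_avoid[OF poly_isCont D1(2)] by blast
  define C where "C = (\<lambda>t. Gf g t * poly D1 t)"
  have cC: "isCont C 0" unfolding C_def using cont_arc[OF gc] by (intro continuous_intros) auto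
  have "poly Nq t = t ^ k * C t" if t: "0 < t" "t < \<epsilon>" for t
  proof -
    have d1: "poly D1 t \<noteq> 0" using \<epsilon>(2)[of t] t by simp
    have "poly Dq t = t ^ k * poly D1 t" by (simp add: D1(1) poly_power)
    then have "poly Dq t \<noteq> 0" using t d1 by simp
    then have "Gf g t = poly Nq t / poly Dq t" using GND t by simp
    then show ?thesis using \<open>poly Dq t \<noteq> 0\<close> \<open>poly Dq t = t ^ k * poly D1 t\<close>
      by (simp add: C_def field_simps)
  qed
  from factor_right[OF \<epsilon>(1) cC this] obtain N1 where N1: "Nq = [:0, 1:] ^ k * N1" by blast
  define S where "S = fps_of_poly N1 * inverse (fps_of_poly D1)"
  have "rright g S"
    unfolding rright_def
  proof (rule exI[of _ N1], rule exI[of _ D1], rule exI[of _ \<epsilon>], intro conjI)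
    show "\<epsilon> > 0" by fact
    show "coeff D1 0 \<noteq> 0" using D1(2) by (simp add: poly_0_coeff_0)
    show "\<forall>t. 0 < t \<and> t < \<epsilon> \<longrightarrow> poly D1 t \<noteq> 0 \<and> Gf g t = poly N1 t / poly D1 t"
    proof (intro allI impI)
      fix t assume t: "0 < t \<and> t < \<epsilon>"
      have d1: "poly D1 t \<noteq> 0" using \<epsilon>(2)[of t] t by simp
      have "poly Dq t = t ^ k * poly D1 t" by (simp add: D1(1) poly_power)
      then have "poly Dq t \<noteq> 0" using t d1 by simp
      then have "Gf g t = poly Nq t / poly Dq t" using GND t by simp
      also have "\<dots> = poly N1 t / poly D1 t"
        using t by (simp add: N1 D1(1) poly_power)
      finally show "poly D1 t \<noteq> 0 \<and> Gf g t = poly N1 t / poly D1 t" using d1 by simp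
    qed
    have "fps_nth (fps_of_poly D1) 0 \<noteq> 0" using D1(2) by (simp add: poly_0_coeff_0)
    then have "fps_of_poly D1 * inverse (fps_of_poly D1) = 1" by (rule inverse_mult_eq_1')
    then show "fps_of_poly D1 * S = fps_of_poly N1"
      by (simp add: S_def mult.left_commute)
  qed
  then show ?thesis by blast
qed

lemma cont_rat_rright:
  assumes "g \<in> cont_rat V_ex"
  shows "\<exists>S. rright g S"
proof -
  from assms have gc: "continuous_on V_ex g" and
    "\<exists>U p q. zariski_open_in V_ex U \<and> U \<noteq> {} \<and> poly4 p \<and> poly4 q \<and>
          (\<forall>x\<in>U. q x \<noteq> 0 \<and> g x = p x / q x)"
    unfolding cont_rat_def by blast+
  then obtain U p q where zo: "zariski_open_in V_ex U" and Une: "U \<noteq> {}" and p: "poly4 p"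
    and q: "poly4 q" and Uq: "\<forall>x\<in>U. q x \<noteq> 0 \<and> g x = p x / q x" by blast
  from zo obtain P where P: "\<forall>h\<in>P. poly4 h" and UP: "U = V_ex - {x. \<forall>h\<in>P. h x = 0}"
    unfolding zariski_open_in_def by blast
  from Une obtain p1 where "p1 \<in> U" by blast
  then have p1V: "p1 \<in> V_ex" and "\<exists>h\<in>P. h p1 \<noteq> 0" using UP by auto
  then obtain h where hP: "h \<in> P" and hp1: "h p1 \<noteq> 0" by blast
  have h: "poly4 h" using P hP by blast
  have "\<not> (\<forall>l w y. h (Qf l w y) = 0)"
    using dens[OF poly4_cont[OF h] _ p1V] hp1 by blast
  then obtain l w1 y1 where wit: "h (Qf l w1 y1) \<noteq> 0" by blast
  have U': "q x \<noteq> 0 \<and> g x = p x / q x" if "x \<in> V_ex" "h x \<noteq> 0" for x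
  proof -
    have "x \<in> U" using that hP UP by auto
    then show ?thesis using Uq by blast
  qed
  obtain a b where "b \<noteq> 0" "\<forall>w. poly b w \<noteq> 0 \<longrightarrow> g (0, 0, w^4, 0) = poly a w / poly b w"
    using key_2var[OF gc p q h U' wit] by blast
  then show ?thesis using from_ab[OF gc] by blast
qed

lemma coord_rright:
  assumes "f \<in> coord_ring V_ex"
  shows "\<exists>P. rright f (fps_of_poly P) \<and> sg (fps_of_poly P) = fps_of_poly P"
proof -
  obtain p where p: "poly4 p" "\<forall>x\<in>V_ex. f x = p x"
    using assms unfolding coord_ring_def by blast
  obtain P where P: "\<And>t. p (0, 0, t^2, 0) = poly P t" using is1_arc[OF p(1)] by blast
  have G: "Gf f t = poly P t" for t using p(2) V_ex_arc P by (simp add: Gf_def)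
  have "poly P (-t) = poly P t" for t using G[of t] G[of "-t"] by (simp add: Gf_def)
  then show ?thesis using rright_poly[of f P, OF G] sg_poly_even by blast
qed

definition f0 :: "pt4 \<Rightarrow> real" where
  "f0 v = (if v \<in> V_ex then sqrt (sqrt ((fst (snd (snd v)))^2 + (snd (snd (snd v)))^2)) else 0)"

lemma poly4_monom:
  "poly4 (\<lambda>v. fst v ^ i * fst (snd v) ^ j * fst (snd (snd v)) ^ k * snd (snd (snd v)) ^ l)"
  unfolding poly4_def
  by (rule exI[of _ "\<lambda>_. 1"], rule exI[of _ "{(i, j, k, l)}"]) simp

lemma sqrt4: "u \<ge> 0 \<Longrightarrow> sqrt (sqrt (u ^ 4)) = (u::real)"
proof -
  assume u: "u \<ge> 0"
  have "u ^ 4 = (u^2)^2" by (simp flip: power_mult)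
  then have "sqrt (u ^ 4) = sqrt ((u^2)^2)" by (simp only:)
  also have "\<dots> = u^2" by (simp only: real_sqrt_abs) simp
  finally have "sqrt (u ^ 4) = u^2" .
  then show ?thesis using u by simp
qed

lemma f0_cont_rat: "f0 \<in> cont_rat V_ex"
  unfolding cont_rat_def
proof (intro CollectI conjI allI impI)
  fix x assume "x \<notin> V_ex" then show "f0 x = 0" by (simp add: f0_def)
next
  have "continuous_on V_ex (\<lambda>v. sqrt (sqrt ((fst (snd (snd v)))^2 + (snd (snd (snd v)))^2)))"
    by (intro continuous_intros)
  then show "continuous_on V_ex f0"
    by (rule continuous_on_cong[THEN iffD1, rotated 2]) (auto simp: f0_def)
next
  define P where "P = {\<lambda>v::pt4. fst (snd v)}"
  define U where "U = V_ex - {x. \<forall>p\<in>P. p x = 0}"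
  have p1: "poly4 (\<lambda>v::pt4. fst (snd v))" using poly4_monom[of 0 1 0 0] by simp
  have p2: "poly4 (\<lambda>v::pt4. fst v ^ 2)" using poly4_monom[of 2 0 0 0] by simp
  have p3: "poly4 (\<lambda>v::pt4. fst (snd v) ^ 2)" using poly4_monom[of 0 2 0 0] by simp
  have zo: "zariski_open_in V_ex U" unfolding zariski_open_in_def U_def using p1 P_def by blast
  have "(1, 1, 1, 0) \<in> U" by (simp add: U_def P_def V_ex_def)
  then have ne: "U \<noteq> {}" by blast
  have rat: "\<forall>x\<in>U. (\<lambda>v. fst (snd v) ^ 2) x \<noteq> 0 \<and> f0 x = (\<lambda>v. fst v ^ 2) x / (\<lambda>v. fst (snd v) ^ 2) x"
  proof
    fix v assume "v \<in> U"
    then have vV: "v \<in> V_ex" and y: "fst (snd v) \<noteq> 0" by (auto simp: U_def P_def)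
    obtain x y z1 z2 where v: "v = (x, y, z1, z2)" by (cases v) auto
    have e: "x ^ 8 = (z1^2 + z2^2) * y ^ 8" using vV v by (simp add: V_ex_def)
    have y0: "y \<noteq> 0" using y v by simp
    have "z1^2 + z2^2 = (x^2 / y^2) ^ 4"
      using e y0 by (simp add: power_divide field_simps flip: power_mult)
    then have "f0 v = x^2 / y^2" using vV v by (simp add: f0_def sqrt4)
    then show "(\<lambda>v. fst (snd v) ^ 2) v \<noteq> 0 \<and> f0 v = (\<lambda>v. fst v ^ 2) v / (\<lambda>v. fst (snd v) ^ 2) v"
      using v y0 by simp
  qed
  show "\<exists>U p q. zariski_open_in V_ex U \<and> U \<noteq> {} \<and> poly4 p \<and> poly4 q \<and> (\<forall>x\<in>U. q x \<noteq> 0 \<and> f0 x = p x / q x)"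
    using zo ne p2 p3 rat by blast
qed

lemma f0_rright: "rright f0 fps_X"
  unfolding rright_def
proof (rule exI[of _ "[:0, 1:]"], rule exI[of _ 1], rule exI[of _ 1], intro conjI)
  show "\<forall>t. 0 < t \<and> t < 1 \<longrightarrow> poly 1 t \<noteq> 0 \<and> Gf f0 t = poly [:0, 1:] t / poly 1 t"
  proof (intro allI impI)
    fix t :: real assume t: "0 < t \<and> t < 1"
    have "(t^2)^2 = t^4" by (simp flip: power_mult)
    then have "Gf f0 t = t" using t by (simp add: Gf_def f0_def V_ex_arc sqrt4)
    then show "poly 1 t \<noteq> 0 \<and> Gf f0 t = poly [:0, 1:] t / poly 1 t" by simp
  qed
qed (simp_all add: fps_of_poly_fps_X)

theorem theorem4p7:
  shows "\<not> substitution_property V_ex"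
proof
  assume sp: "substitution_property V_ex"
  have hco: "alg_hom_into_ps V_ex (coord_ring V_ex) psi_p"
    using psi_hom(1)[of "coord_ring V_ex"] coord_rright by blast
  have hp: "alg_hom_into_ps V_ex (cont_rat V_ex) psi_p"
    using psi_hom(1)[of "cont_rat V_ex"] cont_rat_rright by blast
  have hm: "alg_hom_into_ps V_ex (cont_rat V_ex) psi_m"
    using psi_hom(2)[of "cont_rat V_ex"] cont_rat_rright by blast
  have agp: "\<forall>f\<in>coord_ring V_ex. psi_p f = psi_p f" by simp
  have agm: "\<forall>f\<in>coord_ring V_ex. psi_m f = psi_p f"
  proof
    fix f assume "f \<in> coord_ring V_ex"
    then obtain P where "rright f (fps_of_poly P)" "sg (fps_of_poly P) = fps_of_poly P"
      using coord_rright by blast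
    then show "psi_m f = psi_p f" by (simp add: psi_m_def psi_p_def Sel)
  qed
  from sp hco have "\<forall>f\<in>cont_rat V_ex. psi_p f = psi_m f"
    unfolding substitution_property_def using hp hm agp agm by blast
  then have "psi_p f0 = psi_m f0" using f0_cont_rat by blast
  then have "psi_p f0 1 = psi_m f0 1" by simp
  moreover have "psi_p f0 1 = 1" using E_nat[of fps_X 1]
    by (simp add: psi_p_def Sel[OF f0_rright])
  moreover have "psi_m f0 1 = -1" using E_nat[of "sg fps_X" 1]
    by (simp add: psi_m_def Sel[OF f0_rright])
  ultimately show False by simp
qed

end
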